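(* Let $\mu$ be a probability measure supported on a symmetric convex domain $\Omega\subset\mathbb R^n$ satisfying the dilation inequality for $\mathcal K_s^n(\Omega)$ with constant $\kappa>0$. Let $f$ be a positive, continuous, symmetric quasi-convex function on $\Omega$ with $$0<\beta:=\frac1{\kappa\log2}\|f^{-1}\Phi_f\|_{L^\infty}<+\infty,$$ and suppose that for some $0<p<1/\beta$ we have $f^p\in\mathrm{QC}(\Omega,\mu)$ and $f^{-p}\in L^1(\mu)$. Then $$\mathrm{med}(f)\le\Big(\frac{e}{1-\beta p}\Big)^\beta\|f\|_{L^{-p}(\mu)},$$ where $\|f\|_{L^{-p}(\mu)}:=(\int_\Omega f^{-p}d\mu)^{-1/p}$ and $\mathrm{med}(f)$ is a L\'evy mean of $f$: $\mu(\{f\ge\mathrm{med}(f)\})\ge\frac12$ and $\mu(\{f\le\mathrm{med}(f)\})\ge\frac12$.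
   Context: Symmetric set: $K=-K$; symmetric function: $f(x)=f(-x)$; quasi-convex: $\{f<\lambda\}$ convex for all $\lambda$. Symmetric convex domain: nonempty open convex $\Omega=-\Omega\subset\mathbb R^n$. $\mathcal K_s^n(\Omega)$: nonempty symmetric open convex subsets of $\Omega$. For Borel $A$, $\varepsilon\in(0,1)$: $A_\varepsilon:=A\cup\{x:\exists y,\ \int_0^1\mathbf 1_A((1-t)x+ty)\,dt>1-\varepsilon\}$; $\mu^*(A):=\liminf_{\varepsilon\downarrow0}(\mu(A_\varepsilon)-\mu(A))/\varepsilon$. Dilation inequality with $\kappa$: $\mu^*(K)\ge-\kappa(1-\mu(K))\log(1-\mu(K))$ for all $K\in\mathcal K_s^n(\Omega)$. $\Phi_f(x):=\limsup_{\varepsilon\downarrow0}\frac{f(x)-f(\frac{1-\varepsilon}{1+\varepsilon}x)}{\varepsilon}$; $\|f^{-1}\Phi_f\|_{L^\infty}$ is the $\mu$-essential supremum of $\Phi_f/f$ on $\Omega$. $\mathrm{QC}(\Omega,\mu)$: all nonnegative, continuous, symmetric quasi-convex $g$ on $\Omega$ for which there exist a nonnegative Borel $h\in L^1(\mu)$ and $\varepsilon_0\in(0,1]$ with $\sup_{\varepsilon\in(0,\varepsilon_0)}\frac{g(x)-g(\frac{1-\varepsilon}{1+\varepsilon}x)}{\varepsilon}\le h(x)$ for all $x\in\Omega$. *)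

theory Defs
  imports "HOL-Probability.Probability"
begin

definition sym_set :: "'a::real_vector set \<Rightarrow> bool" where
  "sym_set K \<longleftrightarrow> uminus ` K = K"

definition sym_convex_domain :: "'a::euclidean_space set \<Rightarrow> bool" where
  "sym_convex_domain \<Omega> \<longleftrightarrow> \<Omega> \<noteq> {} \<and> open \<Omega> \<and> convex \<Omega> \<and> sym_set \<Omega>"

definition Ksym :: "'a::euclidean_space set \<Rightarrow> 'a set set" where
  "Ksym \<Omega> = {K. K \<subseteq> \<Omega> \<and> K \<noteq> {} \<and> open K \<and> convex K \<and> sym_set K}"

definition sym_fun_on :: "'a::real_vector set \<Rightarrow> ('a \<Rightarrow> real) \<Rightarrow> bool" where
  "sym_fun_on \<Omega> f \<longleftrightarrow> (\<forall>x\<in>\<Omega>. f (- x) = f x)"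

definition quasi_convex_on :: "'a::real_vector set \<Rightarrow> ('a \<Rightarrow> real) \<Rightarrow> bool" where
  "quasi_convex_on \<Omega> f \<longleftrightarrow> (\<forall>c. convex {x\<in>\<Omega>. f x < c})"

definition dil_set :: "'a::euclidean_space set \<Rightarrow> real \<Rightarrow> 'a set" where
  "dil_set A \<epsilon> = A \<union> {x. \<exists>y. (LINT t:{0..1}|lborel. indicator A ((1 - t) *\<^sub>R x + t *\<^sub>R y)) > 1 - \<epsilon>}"

definition dil_measure :: "'a::euclidean_space measure \<Rightarrow> 'a set \<Rightarrow> ereal" where
  "dil_measure \<mu> A =
     Liminf (at_right 0) (\<lambda>\<epsilon>. ereal ((measure \<mu> (dil_set A \<epsilon>) - measure \<mu> A) / \<epsilon>))"

definition dilation_ineq :: "'a::euclidean_space measure \<Rightarrow> 'a set \<Rightarrow> real \<Rightarrow> bool" where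
  "dilation_ineq \<mu> \<Omega> \<kappa> \<longleftrightarrow>
     (\<forall>K\<in>Ksym \<Omega>. dil_measure \<mu> K \<ge>
        ereal (- \<kappa> * (1 - measure \<mu> K) * ln (1 - measure \<mu> K)))"

definition Phi :: "('a::real_vector \<Rightarrow> real) \<Rightarrow> 'a \<Rightarrow> ereal" where
  "Phi f x = Limsup (at_right 0)
     (\<lambda>\<epsilon>. ereal ((f x - f (((1 - \<epsilon>) / (1 + \<epsilon>)) *\<^sub>R x)) / \<epsilon>))"

definition esssup_on :: "'a measure \<Rightarrow> 'a set \<Rightarrow> ('a \<Rightarrow> ereal) \<Rightarrow> ereal" where
  "esssup_on \<mu> \<Omega> g = Inf {C. AE x in \<mu>. x \<in> \<Omega> \<longrightarrow> g x \<le> C}"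

definition QC :: "'a::euclidean_space set \<Rightarrow> 'a measure \<Rightarrow> ('a \<Rightarrow> real) set" where
  "QC \<Omega> \<mu> = {g. (\<forall>x\<in>\<Omega>. g x \<ge> 0) \<and> continuous_on \<Omega> g \<and> sym_fun_on \<Omega> g \<and>
      quasi_convex_on \<Omega> g \<and>
      (\<exists>h \<epsilon>\<^sub>0. h \<in> borel_measurable borel \<and> (\<forall>x. h x \<ge> 0) \<and> integrable \<mu> h \<and>
         0 < \<epsilon>\<^sub>0 \<and> \<epsilon>\<^sub>0 \<le> 1 \<and>
         (\<forall>x\<in>\<Omega>. \<forall>\<epsilon>\<in>{0<..<\<epsilon>\<^sub>0}. (g x - g (((1 - \<epsilon>) / (1 + \<epsilon>)) *\<^sub>R x)) / \<epsilon> \<le> h x))}"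

definition levy_mean :: "'a measure \<Rightarrow> 'a set \<Rightarrow> ('a \<Rightarrow> real) \<Rightarrow> real \<Rightarrow> bool" where
  "levy_mean \<mu> \<Omega> f m \<longleftrightarrow>
     measure \<mu> {x\<in>\<Omega>. f x \<ge> m} \<ge> 1/2 \<and> measure \<mu> {x\<in>\<Omega>. f x \<le> m} \<ge> 1/2"

end

theory Submission
  imports Defs
begin



lemma L_I:
  fixes u :: real assumes "0 \<le> u" "u \<le> 1/2"
  shows "ln 2 * u \<le> - (1 - u) * ln (1 - u)"
proof -
  define y where "y = 1 / (1 - u)"
  have y1: "1 \<le> y" "y \<le> 2" using assms by (auto simp: y_def field_simps)
  have "exp ((y-1) * ln 2) \<le> 1 + (y - 1)"
  proof -
    have "exp ((1 - (y-1)) *\<^sub>R 0 + (y-1) *\<^sub>R ln 2) \<le> (1 - (y-1)) * exp 0 + (y-1) * exp (ln 2)"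
      using y1 by (intro convex_onD[OF exp_convex]) auto
    then show ?thesis by simp
  qed
  then have "(y-1) * ln 2 \<le> ln y"
    using y1 by (metis add.commute diff_add_cancel exp_le_cancel_iff exp_ln less_le_trans zero_less_one)
  moreover have "ln y = - ln (1 - u)" using assms by (simp add: y_def ln_div)
  moreover have "(1 - u) * (y - 1) = u" using assms by (simp add: y_def field_simps)
  ultimately have "(1-u) * ((y-1) * ln 2) \<le> (1-u) * (- ln (1-u))"
    using assms by (intro mult_left_mono) auto
  moreover have "(1-u) * ((y-1) * ln 2) = u * ln 2"
    using \<open>(1 - u) * (y - 1) = u\<close> by (metis mult.assoc)
  ultimately show ?thesis by (simp add: algebra_simps)
qed

lemma L_final:
  fixes t :: real assumes "0 < t" "t < 1"
  shows "1 \<le> exp t * (1 - t) powr (1 - t)"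
proof -
  have "ln (1/(1-t)) \<le> 1/(1-t) - 1" using assms by (intro ln_le_minus_one) auto
  then have "- ln (1-t) \<le> t / (1-t)" using assms by (simp add: ln_div field_simps)
  then have "(1-t) * (- ln (1-t)) \<le> t" using assms by (simp add: field_simps)
  then have "0 \<le> t + (1-t) * ln (1-t)" by simp
  then have "1 \<le> exp (t + (1-t) * ln (1-t))" by simp
  also have "\<dots> = exp t * (1-t) powr (1-t)" using assms
    by (simp add: exp_add powr_def)
  finally show ?thesis .
qed

lemma L_pow1:
  fixes a b p :: real assumes "0 < a" "a \<le> b" "0 < p"
  shows "a powr (-p) - b powr (-p) \<le> p * a powr (-p-1) * (b - a)"
proof -
  have "b powr (-p) = a powr (-p) * exp (-p * ln (b/a))"
    using assms by (simp add: powr_def ln_div algebra_simps flip: exp_add)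
  also have "exp (-p * ln (b/a)) \<ge> 1 - p * ln (b/a)"
    using exp_ge_add_one_self[of "-p * ln (b/a)"] by simp
  moreover have "ln (b/a) \<le> b/a - 1" using assms by (intro ln_le_minus_one) auto
  ultimately have "b powr (-p) \<ge> a powr (-p) * (1 - p * (b/a - 1))"
    using assms
    by (smt (verit, best) mult_left_mono mult_left_mono powr_gt_zero)
  moreover have "a powr (-p) * (p * (b/a - 1)) = p * a powr (-p-1) * (b - a)"
    using assms by (simp add: powr_diff field_simps powr_minus)
  ultimately show ?thesis by (simp add: algebra_simps)
qed

lemma L_pow2:
  fixes a b p l :: real assumes "0 < l" "l \<le> a" "a \<le> b" "0 < p"
  shows "a powr (-p) - b powr (-p) \<le> (b powr p - a powr p) / l powr (2*p)"
proof -
  have ap: "0 < a powr p" "0 < b powr p" "0 < l powr p" using assms by auto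
  have "a powr (-p) - b powr (-p) = (b powr p - a powr p) / (a powr p * b powr p)"
    using ap assms by (simp add: powr_minus field_simps)
  also have "\<dots> \<le> (b powr p - a powr p) / (l powr p * l powr p)"
    using assms ap by (intro divide_left_mono mult_mono powr_mono2) (auto intro: powr_mono2)
  also have "l powr p * l powr p = l powr (2*p)" by (simp add: powr_add[symmetric])
  finally show ?thesis .
qed



lemma geo_T:
  fixes K :: "'a::euclidean_space set"
  assumes "0<\<epsilon>" "\<epsilon><1"
    and I: "(LINT t:{0..1}|lborel. indicator K ((1 - t) *\<^sub>R x + t *\<^sub>R y)) > 1 - \<epsilon>"
  shows "\<exists>s r. s \<in> {0..1} \<and> r \<in> {0..1} \<and> (1 - s) *\<^sub>R x + s *\<^sub>R y \<in> K \<and>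
      (1 - r) *\<^sub>R x + r *\<^sub>R y \<in> K \<and> s < \<epsilon> * r"
proof (rule ccontr)
  assume H: "\<not> ?thesis"
  define T where "T = {t\<in>{0..1}. (1 - t) *\<^sub>R x + t *\<^sub>R y \<in> K}"
  have H': "\<And>s r. s \<in> T \<Longrightarrow> r \<in> T \<Longrightarrow> \<epsilon> * r \<le> s" using H unfolding T_def by force
  have eq: "(LINT t:{0..1}|lborel. (indicator K ((1 - t) *\<^sub>R x + t *\<^sub>R y) :: real))
      = (\<integral>t. (indicator T t :: real) \<partial>lborel)"
    unfolding set_lebesgue_integral_def
    by (intro Bochner_Integration.integral_cong) (auto simp: T_def indicator_def)
  show False
  proof (cases "T = {}")
    case True
    then show ?thesis using I eq assms by simp
  next
    case False
    define S where "S = Sup T"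
    have bdd: "bdd_above T" unfolding T_def by (rule bdd_aboveI[of _ 1]) auto
    have S1: "S \<le> 1" unfolding S_def using False by (intro cSup_least) (auto simp: T_def)
    have sub: "T \<subseteq> {\<epsilon> * S .. S}"
    proof
      fix s assume s: "s \<in> T"
      have "s \<le> S" unfolding S_def using bdd s by (rule cSup_upper[rotated])
      moreover have "S \<le> s / \<epsilon>" unfolding S_def
      proof (rule cSup_least)
        show "T \<noteq> {}" by (rule False)
        fix r assume "r \<in> T" then have "\<epsilon> * r \<le> s" using H'[OF s] by blast
        then show "r \<le> s / \<epsilon>" using assms by (simp add: field_simps mult.commute)
      qed
      ultimately show "s \<in> {\<epsilon> * S .. S}" using assms by (auto simp: field_simps)
    qed
    have S0: "0 \<le> S"
    proof -
      obtain s where "s \<in> T" using False by blast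
      then have "\<epsilon> * S \<le> S" using sub by auto
      then have "0 \<le> (1 - \<epsilon>) * S" by (simp add: algebra_simps)
      then show ?thesis using assms by (simp add: zero_le_mult_iff)
    qed
    have "(\<integral>t. (indicator T t :: real) \<partial>lborel) \<le> (\<integral>t. indicator {\<epsilon> * S .. S} t \<partial>lborel)"
    proof (rule integral_mono_AE')
      show "integrable lborel (indicator {\<epsilon> * S..S} :: real \<Rightarrow> real)"
        by (intro integrable_real_indicator) (auto simp: emeasure_lborel_Icc_eq)
      show "AE t in lborel. indicator T t \<le> (indicator {\<epsilon> * S..S} t :: real)"
        using sub by (intro AE_I2) (auto simp: indicator_def)
    qed (auto simp: indicator_def)
    also have "\<dots> = S - \<epsilon> * S" using S0 assms by (simp add: mult_le_cancel_right1 mult_left_le_one_le)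
    also have "\<dots> = (1 - \<epsilon>) * S" by (simp add: algebra_simps)
    also have "\<dots> \<le> 1 - \<epsilon>" using S1 assms mult_left_mono[of S 1 "1-\<epsilon>"] by auto
    finally show False using I eq by linarith
  qed
qed


lemma geo:
  fixes K :: "'a::euclidean_space set"
  assumes K: "convex K" "sym_set K" "0 \<in> K" and e: "0<\<epsilon>" "\<epsilon><1" and x: "x \<in> dil_set K \<epsilon>"
  shows "((1-\<epsilon>)/(1+\<epsilon>)) *\<^sub>R x \<in> K"
proof -
  define c where "c = (1-\<epsilon>)/(1+\<epsilon>)"
  have c: "0 < c" "c \<le> 1" using e by (auto simp: c_def)
  have star: "z \<in> K \<Longrightarrow> 0 \<le> \<theta> \<Longrightarrow> \<theta> \<le> 1 \<Longrightarrow> \<theta> *\<^sub>R z \<in> K" for z \<theta>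
    using convexD[OF K(1), of z 0 \<theta> "1-\<theta>"] K(3) by auto
  have neg: "w \<in> K \<Longrightarrow> - w \<in> K" for w using K(2) unfolding sym_set_def by force
  show ?thesis
  proof (cases "x \<in> K")
    case True then show ?thesis using star c by (simp add: c_def)
  next
    case False
    then obtain y where "(LINT t:{0..1}|lborel. indicator K ((1 - t) *\<^sub>R x + t *\<^sub>R y)) > 1 - \<epsilon>"
      using x unfolding dil_set_def by auto
    from geo_T[OF e this] obtain s r where sr: "s \<in> {0..1}" "r \<in> {0..1}"
      "(1 - s) *\<^sub>R x + s *\<^sub>R y \<in> K" "(1 - r) *\<^sub>R x + r *\<^sub>R y \<in> K" "s < \<epsilon> * r" by blast
    define u where "u = (1 - s) *\<^sub>R x + s *\<^sub>R y"
    define w where "w = (1 - r) *\<^sub>R x + r *\<^sub>R y"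
    have "0 < \<epsilon> * r" using sr by auto
    then have r0: "0 < r" using e by (simp add: zero_less_mult_iff)
    have "\<epsilon> * r \<le> 1 * r" using e r0 by (intro mult_right_mono) auto
    then have sr': "s < r" using sr(5) by simp
    define \<alpha> where "\<alpha> = s / (r - s)"
    have a0: "0 \<le> \<alpha>" using sr sr' by (auto simp: \<alpha>_def)
    have xeq: "x = (1 + \<alpha>) *\<^sub>R u + \<alpha> *\<^sub>R (- w)"
    proof -
      have "(1 + \<alpha>) *\<^sub>R u + \<alpha> *\<^sub>R (- w) = u + \<alpha> *\<^sub>R (u - w)" by (simp add: algebra_simps)
      also have "u - w = (r - s) *\<^sub>R (x - y)" by (simp add: u_def w_def algebra_simps)
      also have "\<alpha> *\<^sub>R ((r - s) *\<^sub>R (x - y)) = s *\<^sub>R (x - y)" using sr' by (simp add: \<alpha>_def)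
      also have "u + s *\<^sub>R (x - y) = x" by (simp add: u_def algebra_simps)
      finally show ?thesis by simp
    qed
    define z where "z = ((1 + \<alpha>)/(1 + 2*\<alpha>)) *\<^sub>R u + (\<alpha>/(1+2*\<alpha>)) *\<^sub>R (- w)"
    have wK: "- w \<in> K" unfolding w_def by (rule neg[OF sr(4)])
    have uK: "u \<in> K" using sr(3) by (simp add: u_def)
    have sum1: "(1 + \<alpha>)/(1 + 2*\<alpha>) + \<alpha>/(1+2*\<alpha>) = 1"
      using a0 by (simp add: add_divide_distrib[symmetric])
    have zK: "z \<in> K" unfolding z_def using a0 
      by (intro convexD[OF K(1) uK wK _ _ sum1]) auto
    have zx: "z = (1/(1+2*\<alpha>)) *\<^sub>R x" using a0
      by (simp add: z_def xeq scaleR_add_right scaleR_diff_right divide_inverse mult.commute)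
    define \<theta> where "\<theta> = c * (1 + 2*\<alpha>)"
    have th: "0 \<le> \<theta>" "\<theta> \<le> 1"
    proof -
      show "0 \<le> \<theta>" using c a0 by (simp add: \<theta>_def)
      have "1 + 2*\<alpha> = (r + s)/(r - s)" using sr' by (simp add: \<alpha>_def field_simps)
      moreover have "c * ((r + s)/(r - s)) \<le> 1"
      proof -
        have le: "(1-\<epsilon>)*(r+s) \<le> (1+\<epsilon>)*(r-s)" using sr(5) by (simp add: algebra_simps)
        have "c * ((r + s)/(r - s)) = ((1-\<epsilon>)*(r+s))/((1+\<epsilon>)*(r-s))" by (simp add: c_def)
        also have "\<dots> \<le> 1" using le sr' e by (intro divide_le_eq_1_pos[THEN iffD2]) auto
        finally show ?thesis .
      qed
      ultimately show "\<theta> \<le> 1" by (simp add: \<theta>_def)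
    qed
    have "c *\<^sub>R x = \<theta> *\<^sub>R z" using a0 by (simp add: zx \<theta>_def)
    then show ?thesis using star[OF zK th] by (simp add: c_def)
  qed
qed



lemma L_int:
  fixes l m p a b :: real
  assumes l: "0 < l" and p: "0 < p" and la: "l \<le> a" and lb: "0 < b" and m: "0 < m"
  shows "(\<integral>\<^sup>+t. indicator {l<..m} t * indicator {a<..b} t * ennreal (p * t powr (-p-1)) \<partial>lborel)
       = ennreal (min a m powr (-p) - min b m powr (-p))"
proof -
  define hi where "hi = min m b"
  have eqi: "indicator {l<..m} t * indicator {a<..b} t = (indicator {a<..hi} t :: ennreal)" for t
    using la by (auto simp: indicator_def hi_def)
  show ?thesis
  proof (cases "a < hi")
    case True
    have "(\<integral>\<^sup>+t. indicator {l<..m} t * indicator {a<..b} t * ennreal (p * t powr (-p-1)) \<partial>lborel)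
        = (\<integral>\<^sup>+t. ennreal (p * t powr (-p-1)) * indicator {a..hi} t \<partial>lborel)"
    proof (rule nn_integral_cong_AE)
      show "AE t in lborel. indicator {l<..m} t * indicator {a<..b} t * ennreal (p * t powr (-p-1))
          = ennreal (p * t powr (-p-1)) * indicator {a..hi} t"
        using AE_lborel_singleton[of a] by eventually_elim (use la in \<open>auto simp: hi_def indicator_def\<close>)
    qed
    also have "\<dots> = ennreal ((- (hi powr (-p))) - (- (a powr (-p))))"
    proof (rule nn_integral_FTC_Icc)
      show "(\<lambda>t. p * t powr (-p-1)) \<in> borel_measurable borel" by measurable
      fix t assume t: "t \<in> {a..hi}"
      then have "0 < t" using l la by auto
      have "((\<lambda>z. z powr (-p)) has_real_derivative (-p) * t powr (-p - 1)) (at t)"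
        using has_real_derivative_powr[OF \<open>0 < t\<close>, of "-p"] by simp
      then show "((\<lambda>z. - (z powr (-p))) has_real_derivative p * t powr (-p - 1)) (at t)"
        using DERIV_minus by fastforce
      show "0 \<le> p * t powr (-p-1)" using p by simp
    qed (use True in auto)
    also have "(- (hi powr (-p))) - (- (a powr (-p))) = min a m powr (-p) - min b m powr (-p)"
      using True by (auto simp: hi_def min_def split: if_splits)
    finally show ?thesis .
  next
    case False
    have "(\<integral>\<^sup>+t. indicator {l<..m} t * indicator {a<..b} t * ennreal (p * t powr (-p-1)) \<partial>lborel) = 0"
      using False by (simp add: eqi)
    moreover have "min a m powr (-p) - min b m powr (-p) \<le> 0"
    proof -
      have "min b m \<le> min a m" using False by (auto simp: hi_def min_def split: if_splits)
      moreover have "0 < min b m" using lb m by auto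
      ultimately show ?thesis using p by (simp add: powr_mono2')
    qed
    ultimately show ?thesis by (simp add: ennreal_eq_0_iff)
  qed
qed



lemma L_ton:
  fixes M :: "'a::euclidean_space measure" and g1 g2 :: "'a \<Rightarrow> real" and w :: "real \<Rightarrow> real"
  assumes sf: "sigma_finite_measure M" and sM: "sets M = sets borel"
    and [measurable]: "g1 \<in> borel_measurable borel" "g2 \<in> borel_measurable borel" "A \<in> sets borel"
      "w \<in> borel_measurable borel"
  shows "(\<integral>\<^sup>+t. indicator {l<..m} t * ennreal (w t) * emeasure M {x\<in>A. g1 x < t \<and> t \<le> g2 x} \<partial>lborel)
       = (\<integral>\<^sup>+x. indicator A x * (\<integral>\<^sup>+t. indicator {l<..m} t * indicator {g1 x<..g2 x} t * ennreal (w t) \<partial>lborel) \<partial>M)"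
proof -
  interpret M: sigma_finite_measure M by (rule sf)
  interpret P: pair_sigma_finite lborel M by unfold_locales
  define f where "f = (\<lambda>t x. indicator {l<..m} t * ennreal (w t) * (indicator {x\<in>A. g1 x < t \<and> t \<le> g2 x} x :: ennreal))"
  have fmeas: "case_prod f \<in> borel_measurable (lborel \<Otimes>\<^sub>M M)"
  proof -
    have "case_prod f \<in> borel_measurable (borel \<Otimes>\<^sub>M borel)"
    proof -
      have "case_prod f = (\<lambda>z. indicator {l<..m} (fst z) * ennreal (w (fst z)) *
          (if snd z \<in> A \<and> g1 (snd z) < fst z \<and> fst z \<le> g2 (snd z) then 1 else 0))"
        by (auto simp: f_def indicator_def fun_eq_iff)
      also have "\<dots> \<in> borel_measurable (borel \<Otimes>\<^sub>M borel)" by measurable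
      finally show ?thesis .
    qed
    moreover have "borel_measurable (lborel \<Otimes>\<^sub>M M) = borel_measurable (borel \<Otimes>\<^sub>M borel)"
      by (rule measurable_cong_sets[OF sets_pair_measure_cong[OF sets_lborel sM] refl])
    ultimately show ?thesis by metis
  qed
  have "(\<integral>\<^sup>+t. indicator {l<..m} t * ennreal (w t) * emeasure M {x\<in>A. g1 x < t \<and> t \<le> g2 x} \<partial>lborel)
      = (\<integral>\<^sup>+t. (\<integral>\<^sup>+x. f t x \<partial>M) \<partial>lborel)"
  proof (rule nn_integral_cong)
    fix t :: real
    have S: "{x\<in>A. g1 x < t \<and> t \<le> g2 x} \<in> sets M" unfolding sM by measurable
    show "indicator {l<..m} t * ennreal (w t) * emeasure M {x\<in>A. g1 x < t \<and> t \<le> g2 x} = (\<integral>\<^sup>+x. f t x \<partial>M)"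
      unfolding f_def using S by (simp add: nn_integral_cmult)
  qed
  also have "\<dots> = (\<integral>\<^sup>+x. (\<integral>\<^sup>+t. f t x \<partial>lborel) \<partial>M)"
    using P.Fubini'[OF fmeas] by simp
  also have "\<dots> = (\<integral>\<^sup>+x. indicator A x * (\<integral>\<^sup>+t. indicator {l<..m} t * indicator {g1 x<..g2 x} t * ennreal (w t) \<partial>lborel) \<partial>M)"
  proof (rule nn_integral_cong)
    fix x
    show "(\<integral>\<^sup>+t. f t x \<partial>lborel) = indicator A x * (\<integral>\<^sup>+t. indicator {l<..m} t * indicator {g1 x<..g2 x} t * ennreal (w t) \<partial>lborel)"
    proof (cases "x \<in> A")
      case True
      then show ?thesis unfolding f_def
        by (simp, intro nn_integral_cong) (auto simp: indicator_def)
    next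
      case False
      then show ?thesis unfolding f_def by (simp add: indicator_def)
    qed
  qed
  finally show ?thesis .
qed



lemma esssup_AE:
  assumes "esssup_on \<mu> \<Omega> g = ereal b"
  shows "AE x in \<mu>. x \<in> \<Omega> \<longrightarrow> g x \<le> ereal b"
proof -
  define S where "S = {C. AE x in \<mu>. x \<in> \<Omega> \<longrightarrow> g x \<le> C}"
  have InfS: "Inf S = ereal b" using assms by (simp add: esssup_on_def S_def)
  have "AE x in \<mu>. x \<in> \<Omega> \<longrightarrow> g x \<le> ereal (b + 1 / Suc n)" for n :: nat
  proof -
    have "Inf S < ereal (b + 1 / Suc n)" using InfS by simp
    then obtain C where C: "C \<in> S" "C < ereal (b + 1 / Suc n)" by (auto simp: Inf_less_iff)
    then show ?thesis unfolding S_def by (auto elim!: eventually_mono)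
  qed
  then have "AE x in \<mu>. \<forall>n::nat. x \<in> \<Omega> \<longrightarrow> g x \<le> ereal (b + 1 / Suc n)"
    by (subst AE_all_countable) blast
  then show ?thesis
  proof (rule eventually_mono, intro impI)
    fix x assume H: "\<forall>n::nat. x \<in> \<Omega> \<longrightarrow> g x \<le> ereal (b + 1 / Suc n)" and x: "x \<in> \<Omega>"
    show "g x \<le> ereal b"
    proof (rule ccontr)
      assume "\<not> g x \<le> ereal b"
      then have gb: "ereal b < g x" by simp
      have H0: "g x \<le> ereal (b + 1)" using H x by (metis of_nat_0 One_nat_def div_by_1 of_nat_1)
      then obtain r where r: "g x = ereal r" using gb by (cases "g x") auto
      then have "b < r" using gb by simp
      then obtain n :: nat where n: "inverse (real (Suc n)) < r - b"
        using ex_inverse_of_nat_less[of "r - b"] by (metis diff_gt_0_iff_gt gr0_implies_Suc of_nat_Suc)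
      have "r \<le> b + 1 / Suc n" using H x r by force
      then show False using n by (simp add: divide_inverse)
    qed
  qed
qed

lemma L_V:
  fixes a b m p :: real assumes "0 < a" "a \<le> b" "0 < m" "0 < p"
  shows "0 \<le> min a m powr (-p) - min b m powr (-p)"
    and "min a m powr (-p) - min b m powr (-p) \<le> a powr (-p) - b powr (-p)"
proof -
  have "min a m \<le> min b m" using assms by auto
  moreover have "0 < min a m" using assms by auto
  ultimately show "0 \<le> min a m powr (-p) - min b m powr (-p)" using assms
    by (simp add: powr_mono2')
  show "min a m powr (-p) - min b m powr (-p) \<le> a powr (-p) - b powr (-p)"
  proof (cases "b \<le> m")
    case True then show ?thesis using assms by simp
  next
    case False
    then have bm: "b powr (-p) \<le> m powr (-p)" using assms by (intro powr_mono2') auto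
    show ?thesis
    proof (cases "a \<le> m")
      case True then show ?thesis using False bm by simp
    next
      case F2: False
      have "a powr (-p) - b powr (-p) \<ge> 0" using assms by (simp add: powr_mono2')
      then show ?thesis using False F2 by simp
    qed
  qed
qed

lemma L_fin2:
  fixes p t m I :: real
  assumes p: "0 < p" and t: "0 < t" "t < 1" and m: "0 < m" and I: "0 < I" "I \<le> m powr (-p) / (1 - t)"
  shows "m \<le> (exp 1 / (1 - t)) powr (t / p) * I powr (-1/p)"
proof -
  have "ln (1/(1-t)) \<le> 1/(1-t) - 1" using t by (intro ln_le_minus_one) auto
  then have "- ln (1-t) \<le> t / (1-t)" using t by (simp add: ln_div field_simps)
  then have "(1-t) * (- ln (1-t)) \<le> t" using t by (simp add: field_simps)
  then have key: "0 \<le> t + (1-t) * ln (1-t)" by simp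
  have "ln I \<le> ln (m powr (-p) / (1 - t))" using I t by simp
  also have "\<dots> = - p * ln m - ln (1 - t)" using m t by (simp add: ln_div ln_powr)
  finally have lnI: "ln I \<le> - p * ln m - ln (1 - t)" .
  have e1: "(exp 1 / (1 - t)) powr (t / p) = exp ((t/p) * (1 - ln (1-t)))"
    using t by (simp add: powr_def ln_div)
  have e2: "I powr (-1/p) = exp ((-1/p) * ln I)" using I by (simp add: powr_def)
  have "ln m \<le> (t/p) * (1 - ln (1-t)) + (-1/p) * ln I"
  proof -
    have "(-1/p) * ln I \<ge> (-1/p) * (- p * ln m - ln (1 - t))"
      using lnI p by (intro mult_left_mono_neg) auto
    also have "(-1/p) * (- p * ln m - ln (1 - t)) = ln m + ln (1-t) / p" using p by (simp add: field_simps)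
    finally have A: "ln m + ln (1-t) / p \<le> (-1/p) * ln I" .
    have "(t/p) * (1 - ln (1-t)) + ln (1-t) / p = (t + (1-t) * ln (1-t)) / p"
      using p by (simp add: field_simps)
    also have "\<dots> \<ge> 0" using key p by simp
    finally show ?thesis using A by linarith
  qed
  then have L: "exp (ln m) \<le> exp ((t/p) * (1 - ln (1-t)) + (-1/p) * ln I)" by simp
  have R: "(exp 1 / (1 - t)) powr (t / p) * I powr (-1/p) = exp ((t/p) * (1 - ln (1-t)) + (-1/p) * ln I)"
    by (simp only: e1 e2 exp_add)
  have "m = exp (ln m)" using m by simp
  then show ?thesis unfolding R using L by linarith
qed

lemma fmono:
  fixes \<Omega> :: "'a::real_vector set" and f :: "'a \<Rightarrow> real"
  assumes cvx: "convex \<Omega>" and sym: "sym_set \<Omega>" and fsym: "sym_fun_on \<Omega> f"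
    and fqc: "quasi_convex_on \<Omega> f" and x: "x \<in> \<Omega>" and c: "0 \<le> c" "c \<le> 1"
  shows "c *\<^sub>R x \<in> \<Omega>" "f (c *\<^sub>R x) \<le> f x"
proof -
  have mx: "- x \<in> \<Omega>" using sym x unfolding sym_set_def by force
  have eq: "c *\<^sub>R x = ((1 + c)/2) *\<^sub>R x + ((1 - c)/2) *\<^sub>R (- x)"
  proof -
    have "((1 + c)/2) *\<^sub>R x + ((1 - c)/2) *\<^sub>R (- x) = ((1 + c)/2 - (1 - c)/2) *\<^sub>R x"
      by (simp add: scaleR_diff_left)
    also have "(1 + c)/2 - (1 - c)/2 = c" by (simp add: field_simps)
    finally show ?thesis by simp
  qed
  have s1: "(1 + c) / 2 + (1 - c) / 2 = (1::real)" by (simp add: field_simps)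
  show "c *\<^sub>R x \<in> \<Omega>" unfolding eq using c x mx
    by (intro convexD[OF cvx]) (auto simp: s1)
  show "f (c *\<^sub>R x) \<le> f x"
  proof (rule ccontr)
    assume "\<not> ?thesis"
    then have lt: "f x < f (c *\<^sub>R x)" by simp
    have cv: "convex {y\<in>\<Omega>. f y < f (c *\<^sub>R x)}" using fqc unfolding quasi_convex_on_def by blast
    have "f (- x) = f x" using fsym x unfolding sym_fun_on_def by blast
    then have "((1 + c)/2) *\<^sub>R x + ((1 - c)/2) *\<^sub>R (- x) \<in> {y\<in>\<Omega>. f y < f (c *\<^sub>R x)}" using c x mx lt
      by (intro convexD[OF cv]) (auto simp: s1)
    then show False using eq[symmetric] by simp
  qed
qed




theorem propositionp:
  fixes \<mu> :: "'a::euclidean_space measure" and \<Omega> :: "'a set"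
    and f :: "'a \<Rightarrow> real" and \<kappa> p m :: real
  assumes prob: "prob_space \<mu>" and borel: "sets \<mu> = sets borel"
    and dom: "sym_convex_domain \<Omega>" and supp: "measure \<mu> \<Omega> = 1"
    and kappa: "\<kappa> > 0" and dil: "dilation_ineq \<mu> \<Omega> \<kappa>"
    and fpos: "\<forall>x\<in>\<Omega>. f x > 0" and fcont: "continuous_on \<Omega> f"
    and fsym: "sym_fun_on \<Omega> f" and fqc: "quasi_convex_on \<Omega> f"
    and beta_pos: "0 < esssup_on \<mu> \<Omega> (\<lambda>x. Phi f x / ereal (f x))"
    and beta_fin: "esssup_on \<mu> \<Omega> (\<lambda>x. Phi f x / ereal (f x)) < \<infinity>"
    and p: "0 < p"
      "p < 1 / (real_of_ereal (esssup_on \<mu> \<Omega> (\<lambda>x. Phi f x / ereal (f x))) / (\<kappa> * ln 2))"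
    and fpQC: "(\<lambda>x. f x powr p) \<in> QC \<Omega> \<mu>"
    and fmp: "set_integrable \<mu> \<Omega> (\<lambda>x. f x powr (- p))"
    and med: "levy_mean \<mu> \<Omega> f m"
  shows "let \<beta> = real_of_ereal (esssup_on \<mu> \<Omega> (\<lambda>x. Phi f x / ereal (f x))) / (\<kappa> * ln 2)
         in m \<le> (exp 1 / (1 - \<beta> * p)) powr \<beta> * (LINT x:\<Omega>|\<mu>. f x powr (- p)) powr (- 1 / p)"
proof -
  interpret P: prob_space \<mu> by (rule prob)
  have spU: "space \<mu> = UNIV" using sets_eq_imp_space_eq[OF borel] by simp
  have bm_eq: "borel_measurable \<mu> = borel_measurable borel" by (rule measurable_cong_sets[OF borel refl])
  have sf: "sigma_finite_measure \<mu>" by unfold_locales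
  from dom have \<Omega>ne: "\<Omega> \<noteq> {}" and \<Omega>o: "open \<Omega>" and \<Omega>c: "convex \<Omega>" and \<Omega>s: "sym_set \<Omega>"
    unfolding sym_convex_domain_def by auto
  have \<Omega>b[measurable]: "\<Omega> \<in> sets borel" using \<Omega>o by auto
  have fm: "\<And>x c. x \<in> \<Omega> \<Longrightarrow> 0 \<le> c \<Longrightarrow> c \<le> 1 \<Longrightarrow> c *\<^sub>R x \<in> \<Omega> \<and> f (c *\<^sub>R x) \<le> f x"
    using fmono[OF \<Omega>c \<Omega>s fsym fqc] by blast
  have O\<Omega>: "0 \<in> \<Omega>"
  proof -
    obtain x where "x \<in> \<Omega>" using \<Omega>ne by blast
    then show ?thesis using fm[of x 0] by simp
  qed
  define l where "l = f 0"
  have l0: "0 < l" using fpos O\<Omega> by (simp add: l_def)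
  have fl: "\<And>x. x \<in> \<Omega> \<Longrightarrow> l \<le> f x" using fm[of _ 0] by (simp add: l_def)
  define B where "B = esssup_on \<mu> \<Omega> (\<lambda>x. Phi f x / ereal (f x))"
  define b where "b = real_of_ereal B"
  have Bb: "B = ereal b" and b0: "0 < b"
    using beta_pos beta_fin unfolding B_def[symmetric] b_def by (cases B; auto)+
  define \<beta> where "\<beta> = b / (\<kappa> * ln 2)"
  have p_lt: "p < 1 / \<beta>" using p(2) by (simp add: \<beta>_def b_def B_def)
  have \<beta>0: "0 < \<beta>" using b0 kappa by (simp add: \<beta>_def)
  define t where "t = \<beta> * p"
  have t0: "0 < t" using \<beta>0 p(1) by (simp add: t_def)
  have t1: "t < 1" using p_lt \<beta>0 by (simp add: t_def field_simps)
  have pb: "p * b = t * (\<kappa> * ln 2)" using kappa by (simp add: t_def \<beta>_def)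
  define I where "I = (LINT x:\<Omega>|\<mu>. f x powr (- p))"
  have I_eq: "I = (\<integral>x. indicator \<Omega> x * f x powr (- p) \<partial>\<mu>)"
    by (simp add: I_def set_lebesgue_integral_def)
  have fmp': "integrable \<mu> (\<lambda>x. indicator \<Omega> x * f x powr (- p))"
    using fmp by (simp add: set_integrable_def)
  have I0: "0 \<le> I" unfolding I_eq by (intro integral_nonneg_AE) (auto simp: indicator_def)
  define fe where "fe = (\<lambda>x. indicator \<Omega> x * f x)"
  have fe_meas[measurable]: "fe \<in> borel_measurable borel"
  proof -
    have "(\<lambda>x. indicator \<Omega> x *\<^sub>R f x) \<in> borel_measurable borel"
      by (rule borel_measurable_continuous_on_indicator[OF \<Omega>b fcont])
    then show ?thesis by (simp add: fe_def)
  qed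
  have fe_eq: "\<And>x. x \<in> \<Omega> \<Longrightarrow> fe x = f x" by (simp add: fe_def)
  show ?thesis
  proof (cases "m \<le> 0")
    case True
    have "0 \<le> (exp 1 / (1 - \<beta> * p)) powr \<beta> * I powr (-1/p)" by simp
    then show ?thesis
      unfolding Let_def B_def[symmetric] b_def[symmetric] \<beta>_def[symmetric] I_def[symmetric]
      using True by linarith
  next
    case False
    then have m0: "0 < m" by simp
    have Ibound: "I \<le> m powr (- p) / (1 - t)"
    proof -
      obtain h \<epsilon>0 where hmeas: "h \<in> borel_measurable borel" and h0: "\<And>x. h x \<ge> 0"
        and hint: "integrable \<mu> h" and \<epsilon>0: "0 < \<epsilon>0" "\<epsilon>0 \<le> 1"
        and hdom: "\<And>x \<epsilon>. x \<in> \<Omega> \<Longrightarrow> \<epsilon> \<in> {0<..<\<epsilon>0} \<Longrightarrow>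
            (f x powr p - f (((1 - \<epsilon>) / (1 + \<epsilon>)) *\<^sub>R x) powr p) / \<epsilon> \<le> h x"
        using fpQC unfolding QC_def by auto
      define e where "e = (\<lambda>n::nat. \<epsilon>0 / (2 + real n))"
      have e0: "\<And>n. 0 < e n" using \<epsilon>0 by (simp add: e_def)
      have e1: "\<And>n. e n < \<epsilon>0" using \<epsilon>0 by (simp add: e_def field_simps add_pos_nonneg)
      have e2: "\<And>n. e n < 1" using e1 \<epsilon>0 by (meson less_le_trans)
      have e_lim0: "e \<longlonglongrightarrow> 0"
      proof -
        have "filterlim (\<lambda>n::nat. 2 + real n) at_top sequentially"
          by (rule filterlim_tendsto_add_at_top[OF tendsto_const filterlim_real_sequentially])
        then have "filterlim (\<lambda>n::nat. 2 + real n) at_infinity sequentially"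
          by (rule filterlim_at_top_imp_at_infinity)
        then show ?thesis unfolding e_def by (intro tendsto_divide_0[OF tendsto_const])
      qed
      have e_lim: "filterlim e (at_right 0) sequentially"
        using e0 by (intro tendsto_imp_filterlim_at_right[OF e_lim0]) auto
      define c where "c = (\<lambda>n. (1 - e n) / (1 + e n))"
      have c0: "\<And>n. 0 \<le> c n" "\<And>n. c n \<le> 1"
      proof -
        fix n
        have a: "0 < e n" "e n < 1" using e0 e2 by auto
        then show "0 \<le> c n" by (simp add: c_def)
        show "c n \<le> 1" using a by (simp add: c_def divide_le_eq_1)
      qed
      have c\<Omega>: "\<And>n x. x \<in> \<Omega> \<Longrightarrow> c n *\<^sub>R x \<in> \<Omega>" using fm c0 by blast
      have cf: "\<And>n x. x \<in> \<Omega> \<Longrightarrow> f (c n *\<^sub>R x) \<le> f x" using fm c0 by blast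
      have fec: "\<And>n x. x \<in> \<Omega> \<Longrightarrow> fe (c n *\<^sub>R x) = f (c n *\<^sub>R x)" using c\<Omega> fe_eq by blast
      define F where "F = (\<lambda>t. measure \<mu> {x\<in>\<Omega>. f x < t})"
      define Fc where "Fc = (\<lambda>n t. measure \<mu> {x\<in>\<Omega>. f (c n *\<^sub>R x) < t})"
      define Gs where "Gs = (\<lambda>n t. {x\<in>\<Omega>. f (c n *\<^sub>R x) < t \<and> t \<le> f x})"
      have setK: "\<And>t. {x\<in>\<Omega>. f x < t} \<in> sets \<mu>"
      proof -
        fix t
        have "{x\<in>\<Omega>. fe x < t} \<in> sets borel" by measurable
        moreover have "{x\<in>\<Omega>. fe x < t} = {x\<in>\<Omega>. f x < t}" by (auto simp: fe_eq)
        ultimately show "{x\<in>\<Omega>. f x < t} \<in> sets \<mu>" using borel by simp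
      qed
      have setKc: "\<And>n t. {x\<in>\<Omega>. f (c n *\<^sub>R x) < t} \<in> sets \<mu>"
      proof -
        fix n t
        have "{x\<in>\<Omega>. fe (c n *\<^sub>R x) < t} \<in> sets borel" by measurable
        moreover have "{x\<in>\<Omega>. fe (c n *\<^sub>R x) < t} = {x\<in>\<Omega>. f (c n *\<^sub>R x) < t}" by (auto simp: fec)
        ultimately show "{x\<in>\<Omega>. f (c n *\<^sub>R x) < t} \<in> sets \<mu>" using borel by simp
      qed
      have Gs_eq: "\<And>n t. Gs n t = {x\<in>\<Omega>. fe (c n *\<^sub>R x) < t \<and> t \<le> fe x}"
        by (auto simp: Gs_def fec fe_eq)
      have setG: "\<And>n t. Gs n t \<in> sets \<mu>"
      proof -
        fix n t
        have "{x\<in>\<Omega>. fe (c n *\<^sub>R x) < t \<and> t \<le> fe x} \<in> sets borel" by measurable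
        then show "Gs n t \<in> sets \<mu>" using borel Gs_eq by simp
      qed
      have G_eq: "\<And>n t. Fc n t - F t = measure \<mu> (Gs n t)"
      proof -
        fix n t
        have "{x\<in>\<Omega>. f (c n *\<^sub>R x) < t} = {x\<in>\<Omega>. f x < t} \<union> Gs n t"
        proof (intro set_eqI iffI)
          fix x assume "x \<in> {x\<in>\<Omega>. f (c n *\<^sub>R x) < t}"
          then show "x \<in> {x\<in>\<Omega>. f x < t} \<union> Gs n t" by (auto simp: Gs_def not_less)
        next
          fix x assume x: "x \<in> {x\<in>\<Omega>. f x < t} \<union> Gs n t"
          then have "x \<in> \<Omega>" by (auto simp: Gs_def)
          then show "x \<in> {x\<in>\<Omega>. f (c n *\<^sub>R x) < t}" using x cf[of x n] by (auto simp: Gs_def)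
        qed
        moreover have "{x\<in>\<Omega>. f x < t} \<inter> Gs n t = {}" by (auto simp: Gs_def)
        ultimately have "Fc n t = F t + measure \<mu> (Gs n t)"
          unfolding Fc_def F_def using setK setG by (simp add: P.finite_measure_Union)
        then show "Fc n t - F t = measure \<mu> (Gs n t)" by simp
      qed
      have F_mono: "mono F"
        unfolding F_def by (intro monoI P.finite_measure_mono setK) auto
      have Fc_mono: "\<And>n. mono (Fc n)"
        unfolding Fc_def by (intro monoI P.finite_measure_mono setKc) auto
      have F_meas[measurable]: "F \<in> borel_measurable borel" by (rule borel_measurable_mono[OF F_mono])
      have Fc_meas[measurable]: "\<And>n. Fc n \<in> borel_measurable borel" by (rule borel_measurable_mono[OF Fc_mono])

      have ptA: "\<And>t y. l < t \<Longrightarrow> t \<le> m \<Longrightarrow> y < \<kappa> * ln 2 * F t \<Longrightarrow>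
          eventually (\<lambda>n. y < (Fc n t - F t) / e n) sequentially"
      proof -
        fix t y assume t: "l < t" "t \<le> m" and y: "y < \<kappa> * ln 2 * F t"
        define K where "K = {x\<in>\<Omega>. f x < t}"
        have K0: "0 \<in> K" using O\<Omega> t by (simp add: K_def l_def)
        have Kc: "convex K" using fqc unfolding K_def quasi_convex_on_def by blast
        have Ko: "open K"
        proof -
          have "open (f -` {..<t} \<inter> \<Omega>)" using fcont \<Omega>o by (simp add: continuous_on_open_vimage)
          moreover have "f -` {..<t} \<inter> \<Omega> = K" by (auto simp: K_def)
          ultimately show ?thesis by simp
        qed
        have neg: "\<And>x. x \<in> \<Omega> \<Longrightarrow> - x \<in> \<Omega>" using \<Omega>s unfolding sym_set_def by force
        have fneg: "\<And>x. x \<in> \<Omega> \<Longrightarrow> f (- x) = f x" using fsym unfolding sym_fun_on_def by blast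
        have negK: "\<And>x. x \<in> K \<Longrightarrow> - x \<in> K" using neg fneg by (auto simp: K_def)
        have Ks: "sym_set K" unfolding sym_set_def
        proof
          show "uminus ` K \<subseteq> K" using negK by auto
          show "K \<subseteq> uminus ` K"
          proof
            fix x assume "x \<in> K"
            then have "- x \<in> K" by (rule negK)
            moreover have "x = - (- x)" by simp
            ultimately show "x \<in> uminus ` K" by blast
          qed
        qed
        have KK: "K \<in> Ksym \<Omega>" using K0 Kc Ko Ks by (auto simp: Ksym_def K_def)
        have FK: "measure \<mu> K = F t" by (simp add: K_def F_def)
        have F0: "0 \<le> F t" by (simp add: F_def)
        have Fhalf: "F t \<le> 1/2"
        proof -
          have "F t \<le> F m" using F_mono t(2) by (simp add: mono_def)
          moreover have "F m + measure \<mu> {x\<in>\<Omega>. m \<le> f x} = 1"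
          proof -
            have s2: "{x\<in>\<Omega>. m \<le> f x} \<in> sets \<mu>"
            proof -
              have "{x\<in>\<Omega>. m \<le> fe x} \<in> sets borel" by measurable
              moreover have "{x\<in>\<Omega>. m \<le> fe x} = {x\<in>\<Omega>. m \<le> f x}" by (auto simp: fe_eq)
              ultimately show ?thesis using borel by simp
            qed
            have "\<Omega> = {x\<in>\<Omega>. f x < m} \<union> {x\<in>\<Omega>. m \<le> f x}" by auto
            then have "measure \<mu> \<Omega> = F m + measure \<mu> {x\<in>\<Omega>. m \<le> f x}"
              unfolding F_def using setK s2 by (metis (no_types, lifting) P.finite_measure_Union
                  disjoint_iff mem_Collect_eq not_less)
            then show ?thesis using supp by simp
          qed
          moreover have "measure \<mu> {x\<in>\<Omega>. m \<le> f x} \<ge> 1/2" using med by (simp add: levy_mean_def)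
          ultimately show ?thesis by linarith
        qed
        have "\<kappa> * (ln 2 * F t) \<le> \<kappa> * (- (1 - F t) * ln (1 - F t))"
          using L_I[OF F0 Fhalf] kappa by (intro mult_left_mono) auto
        then have "y < - \<kappa> * (1 - measure \<mu> K) * ln (1 - measure \<mu> K)" using y FK by (simp add: algebra_simps)
        then have "ereal y < ereal (- \<kappa> * (1 - measure \<mu> K) * ln (1 - measure \<mu> K))" by simp
        moreover have "ereal (- \<kappa> * (1 - measure \<mu> K) * ln (1 - measure \<mu> K)) \<le> dil_measure \<mu> K"
          using dil KK unfolding dilation_ineq_def by blast
        ultimately have "ereal y < dil_measure \<mu> K" by (rule less_le_trans)
        then have ev1: "eventually (\<lambda>\<epsilon>. ereal y < ereal ((measure \<mu> (dil_set K \<epsilon>) - measure \<mu> K) / \<epsilon>)) (at_right 0)"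
          unfolding dil_measure_def by (rule less_LiminfD)
        have ev2: "eventually (\<lambda>\<epsilon>. 0 < \<epsilon> \<and> \<epsilon> < 1) (at_right (0::real))"
          unfolding eventually_at_right_field by (intro exI[of _ 1]) auto
        have ev3: "eventually (\<lambda>\<epsilon>. y < (measure \<mu> {x\<in>\<Omega>. f (((1-\<epsilon>)/(1+\<epsilon>)) *\<^sub>R x) < t} - F t) / \<epsilon>) (at_right 0)"
          using ev1 ev2
        proof eventually_elim
          case (elim \<epsilon>)
          define E where "E = {x\<in>\<Omega>. f (((1-\<epsilon>)/(1+\<epsilon>)) *\<^sub>R x) < t}"
          have cc: "0 \<le> (1-\<epsilon>)/(1+\<epsilon>)" "(1-\<epsilon>)/(1+\<epsilon>) \<le> 1" using elim(2) by (auto simp: divide_le_eq_1)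
          have Es: "E \<in> sets \<mu>"
          proof -
            have "{x\<in>\<Omega>. fe (((1-\<epsilon>)/(1+\<epsilon>)) *\<^sub>R x) < t} \<in> sets borel" by measurable
            moreover have "{x\<in>\<Omega>. fe (((1-\<epsilon>)/(1+\<epsilon>)) *\<^sub>R x) < t} = E"
              using fm[OF _ cc] fe_eq by (auto simp: E_def)
            ultimately show ?thesis using borel by simp
          qed
          have sub: "dil_set K \<epsilon> \<subseteq> E \<union> (UNIV - \<Omega>)"
          proof
            fix x assume x: "x \<in> dil_set K \<epsilon>"
            show "x \<in> E \<union> (UNIV - \<Omega>)"
            proof (cases "x \<in> \<Omega>")
              case True
              have "((1-\<epsilon>)/(1+\<epsilon>)) *\<^sub>R x \<in> K" using geo[OF Kc Ks K0 _ _ x] elim(2) by auto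
              then show ?thesis using True by (auto simp: K_def E_def)
            qed auto
          qed
          have comp0: "measure \<mu> (UNIV - \<Omega>) = 0"
            using P.prob_compl[of \<Omega>] borel \<Omega>b supp spU by simp
          have "measure \<mu> (dil_set K \<epsilon>) \<le> measure \<mu> E"
          proof (cases "dil_set K \<epsilon> \<in> sets \<mu>")
            case True
            have "measure \<mu> (dil_set K \<epsilon>) \<le> measure \<mu> (E \<union> (UNIV - \<Omega>))"
              using sub Es borel \<Omega>b by (intro P.finite_measure_mono) auto
            also have "\<dots> = measure \<mu> E + measure \<mu> (UNIV - \<Omega>)"
              using Es borel \<Omega>b by (intro P.finite_measure_Union) (auto simp: E_def)
            finally show ?thesis using comp0 by simp
          next
            case False
            then show ?thesis by (simp add: measure_notin_sets)
          qed
          then have "(measure \<mu> (dil_set K \<epsilon>) - F t) / \<epsilon> \<le> (measure \<mu> E - F t) / \<epsilon>"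
            using elim(2) by (intro divide_right_mono) auto
          moreover have "y < (measure \<mu> (dil_set K \<epsilon>) - F t) / \<epsilon>" using elim(1) FK by simp
          ultimately show ?case by (simp add: E_def)
        qed
        from filterlim_iff[THEN iffD1, OF e_lim, rule_format, OF ev3]
        show "eventually (\<lambda>n. y < (Fc n t - F t) / e n) sequentially" by (simp add: Fc_def c_def)
      qed

      define w where "w = (\<lambda>t::real. p * t powr (-p-1))"
      have w0: "\<And>t. 0 \<le> w t" using p(1) by (simp add: w_def)
      have w_meas[measurable]: "w \<in> borel_measurable borel" unfolding w_def by measurable
      define v where "v = (\<lambda>n t. indicator {l<..m} t * ennreal (w t * ((Fc n t - F t) / e n)))"
      have v_meas: "\<And>n. v n \<in> borel_measurable lborel" unfolding v_def by measurable
      define u where "u = (\<lambda>n x. indicator \<Omega> x *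
          ennreal ((min (fe (c n *\<^sub>R x)) m powr (-p) - min (fe x) m powr (-p)) / e n))"
      have u_meas: "\<And>n. u n \<in> borel_measurable \<mu>" unfolding bm_eq u_def by measurable

      have fatou: "(\<integral>\<^sup>+t. indicator {l<..m} t * ennreal (w t * (\<kappa> * ln 2 * F t)) \<partial>lborel)
          \<le> liminf (\<lambda>n. \<integral>\<^sup>+t. v n t \<partial>lborel)"
      proof -
        have "(\<integral>\<^sup>+t. indicator {l<..m} t * ennreal (w t * (\<kappa> * ln 2 * F t)) \<partial>lborel)
            \<le> (\<integral>\<^sup>+t. liminf (\<lambda>n. v n t) \<partial>lborel)"
        proof (intro nn_integral_mono)
          fix t :: real
          show "indicator {l<..m} t * ennreal (w t * (\<kappa> * ln 2 * F t)) \<le> liminf (\<lambda>n. v n t)"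
          proof (cases "t \<in> {l<..m}")
            case False then show ?thesis by simp
          next
            case True
            then have tt: "l < t" "t \<le> m" by auto
            have wt: "0 < w t" using tt l0 p(1) by (simp add: w_def)
            have "ennreal (w t * (\<kappa> * ln 2 * F t)) \<le> liminf (\<lambda>n. v n t)"
              unfolding le_Liminf_iff
            proof (intro allI impI)
              fix y :: ennreal assume y: "y < ennreal (w t * (\<kappa> * ln 2 * F t))"
              then obtain y' where y': "0 \<le> y'" "y = ennreal y'" by (cases y) auto
              have "y' < w t * (\<kappa> * ln 2 * F t)" using y y' by (simp add: ennreal_less_iff)
              then have "y' / w t < \<kappa> * ln 2 * F t" using wt by (simp add: field_simps)
              from ptA[OF tt this]
              show "eventually (\<lambda>n. y < v n t) sequentially"
              proof eventually_elim
                case (elim n)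
                then have "y' < w t * ((Fc n t - F t) / e n)" using wt by (simp add: field_simps)
                then show ?case using True y' by (simp add: v_def ennreal_lessI)
              qed
            qed
            then show ?thesis using True by simp
          qed
        qed
        also have "\<dots> \<le> liminf (\<lambda>n. \<integral>\<^sup>+t. v n t \<partial>lborel)" by (rule nn_integral_liminf[OF v_meas])
        finally show ?thesis .
      qed

      have C1: "\<And>n. (\<integral>\<^sup>+t. v n t \<partial>lborel) = (\<integral>\<^sup>+x. u n x \<partial>\<mu>)"
      proof -
        fix n
        have "(\<integral>\<^sup>+t. v n t \<partial>lborel) = (\<integral>\<^sup>+t. indicator {l<..m} t * ennreal (w t / e n) *
            emeasure \<mu> {x\<in>\<Omega>. fe (c n *\<^sub>R x) < t \<and> t \<le> fe x} \<partial>lborel)"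
        proof (rule nn_integral_cong)
          fix t :: real
          have "emeasure \<mu> {x\<in>\<Omega>. fe (c n *\<^sub>R x) < t \<and> t \<le> fe x} = ennreal (Fc n t - F t)"
            using G_eq[of n t] Gs_eq[of n t] by (simp add: P.emeasure_eq_measure)
          moreover have "ennreal (w t * ((Fc n t - F t) / e n)) = ennreal (w t / e n) * ennreal (Fc n t - F t)"
          proof -
            have "w t * ((Fc n t - F t) / e n) = (w t / e n) * (Fc n t - F t)" by simp
            moreover have "0 \<le> Fc n t - F t" using G_eq[of n t] by simp
            ultimately show ?thesis by (metis ennreal_mult'')
          qed
          ultimately show "v n t = indicator {l<..m} t * ennreal (w t / e n) *
              emeasure \<mu> {x\<in>\<Omega>. fe (c n *\<^sub>R x) < t \<and> t \<le> fe x}"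
            unfolding v_def by (simp only: mult.assoc)
        qed
        also have "\<dots> = (\<integral>\<^sup>+x. indicator \<Omega> x * (\<integral>\<^sup>+t. indicator {l<..m} t *
            indicator {fe (c n *\<^sub>R x)<..fe x} t * ennreal (w t / e n) \<partial>lborel) \<partial>\<mu>)"
          by (rule L_ton[OF sf borel]) measurable
        also have "\<dots> = (\<integral>\<^sup>+x. u n x \<partial>\<mu>)"
        proof (rule nn_integral_cong)
          fix x
          show "indicator \<Omega> x * (\<integral>\<^sup>+t. indicator {l<..m} t *
            indicator {fe (c n *\<^sub>R x)<..fe x} t * ennreal (w t / e n) \<partial>lborel) = u n x"
          proof (cases "x \<in> \<Omega>")
            case False then show ?thesis by (simp add: u_def)
          next
            case True
            have a: "l \<le> fe (c n *\<^sub>R x)" using fl c\<Omega> True fec by simp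
            have b: "0 < fe x" using fpos True fe_eq by simp
            have "(\<integral>\<^sup>+t. indicator {l<..m} t * indicator {fe (c n *\<^sub>R x)<..fe x} t * ennreal (w t / e n) \<partial>lborel)
              = (\<integral>\<^sup>+t. ennreal (1 / e n) * (indicator {l<..m} t * indicator {fe (c n *\<^sub>R x)<..fe x} t *
                  ennreal (p * t powr (-p-1))) \<partial>lborel)"
            proof (rule nn_integral_cong)
              fix t :: real
              have "ennreal (w t / e n) = ennreal (1 / e n) * ennreal (p * t powr (-p-1))"
                using w0[of t] by (simp add: w_def ennreal_mult'' divide_inverse mult.commute)
              then show "indicator {l<..m} t * indicator {fe (c n *\<^sub>R x)<..fe x} t * ennreal (w t / e n)
                = ennreal (1 / e n) * (indicator {l<..m} t * indicator {fe (c n *\<^sub>R x)<..fe x} t *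
                  ennreal (p * t powr (-p-1)))" by (simp add: ac_simps)
            qed
            also have "\<dots> = ennreal (1 / e n) * (\<integral>\<^sup>+t. indicator {l<..m} t * indicator {fe (c n *\<^sub>R x)<..fe x} t *
                  ennreal (p * t powr (-p-1)) \<partial>lborel)"
              by (rule nn_integral_cmult) measurable
            also have "\<dots> = ennreal (1 / e n) * ennreal (min (fe (c n *\<^sub>R x)) m powr (-p) - min (fe x) m powr (-p))"
              by (simp add: L_int[OF l0 p(1) a b m0])
            also have "\<dots> = ennreal ((min (fe (c n *\<^sub>R x)) m powr (-p) - min (fe x) m powr (-p)) / e n)"
            proof -
              have "0 \<le> min (fe (c n *\<^sub>R x)) m powr (-p) - min (fe x) m powr (-p)"
                using L_V(1)[of "fe (c n *\<^sub>R x)" "fe x" m p] a l0 cf[OF True] fec[OF True] fe_eq[OF True] m0 p(1)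
                by simp
              then show ?thesis by (simp add: ennreal_mult''[symmetric] divide_inverse mult.commute)
            qed
            finally show ?thesis using True by (simp add: u_def)
          qed
        qed
        finally show "(\<integral>\<^sup>+t. v n t \<partial>lborel) = (\<integral>\<^sup>+x. u n x \<partial>\<mu>)" .
      qed

      have C2: "(\<integral>\<^sup>+t. indicator {l<..m} t * ennreal (w t * (\<kappa> * ln 2 * F t)) \<partial>lborel)
          = (\<integral>\<^sup>+x. indicator \<Omega> x * ennreal (\<kappa> * ln 2 * (min (fe x) m powr (-p) - m powr (-p))) \<partial>\<mu>)"
      proof -
        have kl: "0 \<le> \<kappa> * ln 2" using kappa by simp
        have "(\<integral>\<^sup>+t. indicator {l<..m} t * ennreal (w t * (\<kappa> * ln 2 * F t)) \<partial>lborel)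
            = (\<integral>\<^sup>+t. indicator {l<..m} t * ennreal (\<kappa> * ln 2 * w t) *
                emeasure \<mu> {x\<in>\<Omega>. fe x < t \<and> t \<le> m} \<partial>lborel)"
        proof (rule nn_integral_cong)
          fix t :: real
          show "indicator {l<..m} t * ennreal (w t * (\<kappa> * ln 2 * F t)) =
              indicator {l<..m} t * ennreal (\<kappa> * ln 2 * w t) * emeasure \<mu> {x\<in>\<Omega>. fe x < t \<and> t \<le> m}"
          proof (cases "t \<in> {l<..m}")
            case False then show ?thesis by simp
          next
            case True
            then have "{x\<in>\<Omega>. fe x < t \<and> t \<le> m} = {x\<in>\<Omega>. f x < t}" by (auto simp: fe_eq)
            then have "emeasure \<mu> {x\<in>\<Omega>. fe x < t \<and> t \<le> m} = ennreal (F t)"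
              by (simp add: F_def P.emeasure_eq_measure)
            moreover have "ennreal (w t * (\<kappa> * ln 2 * F t)) = ennreal (\<kappa> * ln 2 * w t) * ennreal (F t)"
            proof -
              have "w t * (\<kappa> * ln 2 * F t) = (\<kappa> * ln 2 * w t) * F t" by simp
              moreover have "0 \<le> F t" by (simp add: F_def)
              ultimately show ?thesis by (metis ennreal_mult'')
            qed
            ultimately show ?thesis by (simp add: mult.assoc)
          qed
        qed
        also have "\<dots> = (\<integral>\<^sup>+x. indicator \<Omega> x * (\<integral>\<^sup>+t. indicator {l<..m} t *
            indicator {fe x<..m} t * ennreal (\<kappa> * ln 2 * w t) \<partial>lborel) \<partial>\<mu>)"
          by (rule L_ton[where ?g1.0=fe and ?g2.0="\<lambda>x. m" and A=\<Omega> and w="\<lambda>t. \<kappa> * ln 2 * w t", OF sf borel]) measurable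
        also have "\<dots> = (\<integral>\<^sup>+x. indicator \<Omega> x * ennreal (\<kappa> * ln 2 * (min (fe x) m powr (-p) - m powr (-p))) \<partial>\<mu>)"
        proof (rule nn_integral_cong)
          fix x
          show "indicator \<Omega> x * (\<integral>\<^sup>+t. indicator {l<..m} t * indicator {fe x<..m} t * ennreal (\<kappa> * ln 2 * w t) \<partial>lborel)
              = indicator \<Omega> x * ennreal (\<kappa> * ln 2 * (min (fe x) m powr (-p) - m powr (-p)))"
          proof (cases "x \<in> \<Omega>")
            case False then show ?thesis by simp
          next
            case True
            have a: "l \<le> fe x" using fl True fe_eq by simp
            have "(\<integral>\<^sup>+t. indicator {l<..m} t * indicator {fe x<..m} t * ennreal (\<kappa> * ln 2 * w t) \<partial>lborel)
              = (\<integral>\<^sup>+t. ennreal (\<kappa> * ln 2) * (indicator {l<..m} t * indicator {fe x<..m} t *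
                  ennreal (p * t powr (-p-1))) \<partial>lborel)"
            proof (rule nn_integral_cong)
              fix t :: real
              have "ennreal (\<kappa> * ln 2 * w t) = ennreal (\<kappa> * ln 2) * ennreal (p * t powr (-p-1))"
                using kl by (simp add: w_def ennreal_mult')
              then show "indicator {l<..m} t * indicator {fe x<..m} t * ennreal (\<kappa> * ln 2 * w t)
                = ennreal (\<kappa> * ln 2) * (indicator {l<..m} t * indicator {fe x<..m} t *
                  ennreal (p * t powr (-p-1)))" by (simp add: ac_simps)
            qed
            also have "\<dots> = ennreal (\<kappa> * ln 2) * (\<integral>\<^sup>+t. indicator {l<..m} t * indicator {fe x<..m} t *
                  ennreal (p * t powr (-p-1)) \<partial>lborel)"
              by (rule nn_integral_cmult) measurable
            also have "\<dots> = ennreal (\<kappa> * ln 2) * ennreal (min (fe x) m powr (-p) - min m m powr (-p))"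
              by (simp only: L_int[OF l0 p(1) a m0 m0])
            also have "\<dots> = ennreal (\<kappa> * ln 2 * (min (fe x) m powr (-p) - m powr (-p)))"
              using kl by (simp add: ennreal_mult')
            finally show ?thesis by simp
          qed
        qed
        finally show ?thesis .
      qed

      have D: "limsup (\<lambda>n. \<integral>\<^sup>+x. u n x \<partial>\<mu>) \<le> (\<integral>\<^sup>+x. limsup (\<lambda>n. u n x) \<partial>\<mu>)"
      proof -
        define L where "L = l powr (2 * p)"
        have L0: "0 < L" using l0 by (simp add: L_def)
        define H where "H = (\<lambda>x. indicator \<Omega> x * ennreal (h x / L))"
        have H_meas: "H \<in> borel_measurable \<mu>" unfolding bm_eq H_def using hmeas by measurable
        have bnd: "\<And>n. AE x in \<mu>. u n x \<le> H x"
        proof (intro AE_I2)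
          fix n x
          show "u n x \<le> H x"
          proof (cases "x \<in> \<Omega>")
            case False then show ?thesis by (simp add: u_def H_def)
          next
            case True
            define a where "a = f (c n *\<^sub>R x)"
            define bb where "bb = f x"
            have a0: "l \<le> a" using fl c\<Omega> True by (simp add: a_def)
            have ab: "a \<le> bb" using cf True by (simp add: a_def bb_def)
            have "min a m powr (-p) - min bb m powr (-p) \<le> a powr (-p) - bb powr (-p)"
              using L_V(2)[of a bb m p] a0 ab l0 m0 p(1) by simp
            also have "\<dots> \<le> (bb powr p - a powr p) / L"
              unfolding L_def by (rule L_pow2[OF l0 a0 ab p(1)])
            finally have "(min a m powr (-p) - min bb m powr (-p)) / e n \<le> ((bb powr p - a powr p) / L) / e n"
              using e0[of n] by (intro divide_right_mono) auto
            also have "\<dots> = ((bb powr p - a powr p) / e n) / L" by simp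
            also have "\<dots> \<le> h x / L"
            proof (intro divide_right_mono)
              show "(bb powr p - a powr p) / e n \<le> h x"
                using hdom[OF True, of "e n"] e0[of n] e1[of n] by (simp add: a_def bb_def c_def)
            qed (use L0 in auto)
            finally have "(min a m powr (-p) - min bb m powr (-p)) / e n \<le> h x / L" .
            then show ?thesis using True by (simp add: u_def H_def fe_eq fec a_def bb_def ennreal_leI)
          qed
        qed
        have Hfin: "(\<integral>\<^sup>+x. H x \<partial>\<mu>) < \<infinity>"
        proof -
          have "(\<integral>\<^sup>+x. H x \<partial>\<mu>) \<le> (\<integral>\<^sup>+x. ennreal (h x / L) \<partial>\<mu>)"
            by (intro nn_integral_mono) (simp add: H_def indicator_def)
          also have "(\<integral>\<^sup>+x. ennreal (h x / L) \<partial>\<mu>) < \<infinity>"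
          proof -
            have "integrable \<mu> (\<lambda>x. h x / L)" using hint by simp
            then show ?thesis by (auto simp: less_top)
          qed
          finally show ?thesis .
        qed
        show ?thesis by (rule nn_integral_limsup[OF u_meas H_meas bnd Hfin])
      qed

      have E: "(\<integral>\<^sup>+x. limsup (\<lambda>n. u n x) \<partial>\<mu>) \<le> ennreal (p * b * I)"
      proof -
        have e_lim0': "c \<longlonglongrightarrow> 1"
        proof -
          have "(\<lambda>n. (1 - e n) / (1 + e n)) \<longlonglongrightarrow> (1 - 0) / (1 + 0)"
            by (intro tendsto_intros e_lim0) auto
          then show ?thesis by (simp add: c_def)
        qed
        have ptE: "limsup (\<lambda>n. u n x) \<le> ennreal (p * b * f x powr (-p))"
          if x: "x \<in> \<Omega>" and Ph: "Phi f x \<le> ereal (b * f x)" for x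
        proof -
          have fx: "0 < f x" using fpos x by simp
          define q where "q = p * f x powr (-p-1)"
          have q0: "0 < q" using p(1) fx by (simp add: q_def)
          define C0 where "C0 = p * b * f x powr (-p)"
          have C0q: "C0 = q * (b * f x)"
          proof -
            have "f x powr (-p-1) * f x = f x powr (-p)"
              using fx by (simp add: powr_add[symmetric] powr_diff)
            then show ?thesis unfolding C0_def q_def by (metis mult.commute mult.left_commute)
          qed
          have C00: "0 < C0" using p(1) b0 fx by (simp add: C0_def)
          have ux: "\<And>n. u n x = ennreal ((min (f (c n *\<^sub>R x)) m powr (-p) - min (f x) m powr (-p)) / e n)"
            using x by (simp add: u_def fe_eq fec)
          have flim: "(\<lambda>n. f (c n *\<^sub>R x)) \<longlonglongrightarrow> f x"
          proof -
            have "(\<lambda>n. c n *\<^sub>R x) \<longlonglongrightarrow> 1 *\<^sub>R x" by (intro tendsto_intros e_lim0')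
            then have "(\<lambda>n. c n *\<^sub>R x) \<longlonglongrightarrow> x" by simp
            then show ?thesis
              by (rule continuous_on_tendsto_compose[OF fcont _ x]) (use c\<Omega> x in auto)
          qed
          have qlim: "(\<lambda>n. p * f (c n *\<^sub>R x) powr (-p-1)) \<longlonglongrightarrow> q"
            unfolding q_def using fx by (intro tendsto_intros flim) auto
          show ?thesis
            unfolding C0_def[symmetric] Limsup_le_iff
          proof (intro allI impI)
            fix C :: ennreal assume C: "ennreal C0 < C"
            show "eventually (\<lambda>n. u n x < C) sequentially"
            proof (cases C)
              case top then show ?thesis by (simp add: ux)
            next
              case (real c')
              then have c'C0: "C0 < c'" using C C00 by (simp add: ennreal_less_iff)
              define y where "y = (b * f x + c' / q) / 2"
              have bfq: "b * f x < c' / q" using c'C0 q0 C0q by (simp add: field_simps mult.commute)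
              have mid: "\<And>a bb::real. a < bb \<Longrightarrow> a < (a + bb) / 2 \<and> (a + bb) / 2 < bb" by (auto simp: field_simps)
              have y1a: "b * f x < y" using mid[OF bfq] unfolding y_def by blast
              have y1b: "y < c' / q" using mid[OF bfq] unfolding y_def by blast
              note y1 = y1a y1b
              have y0: "0 < y" using b0 fx y1 by (smt (verit) mult_pos_pos)
              have qy: "q < c' / y" using y1 q0 y0 by (simp add: field_simps mult.commute)
              define z where "z = (q + c' / y) / 2"
              have z1a: "q < z" using mid[OF qy] unfolding z_def by blast
              have z1b: "z < c' / y" using mid[OF qy] unfolding z_def by blast
              note z1 = z1a z1b
              have zy: "z * y < c'" using z1 y0 by (simp add: field_simps)
              have ev1: "eventually (\<lambda>n. (f x - f (c n *\<^sub>R x)) / e n < y) sequentially"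
              proof -
                have "Phi f x < ereal y" using Ph y1 by (meson ereal_less(2) le_less_trans less_ereal.simps(1))
                then have "eventually (\<lambda>\<epsilon>. ereal ((f x - f (((1 - \<epsilon>) / (1 + \<epsilon>)) *\<^sub>R x)) / \<epsilon>) < ereal y) (at_right 0)"
                  unfolding Phi_def by (rule Limsup_lessD)
                from filterlim_iff[THEN iffD1, OF e_lim, rule_format, OF this]
                show ?thesis by (simp add: c_def)
              qed
              have ev2: "eventually (\<lambda>n. p * f (c n *\<^sub>R x) powr (-p-1) < z) sequentially"
                by (rule order_tendstoD(2)[OF qlim z1(1)])
              from ev1 ev2 show ?thesis
              proof eventually_elim
                case (elim n)
                define a where "a = f (c n *\<^sub>R x)"
                have a0: "0 < a" using fpos c\<Omega> x by (simp add: a_def)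
                have ab: "a \<le> f x" using cf x by (simp add: a_def)
                define qn where "qn = p * a powr (-p-1)"
                define dn where "dn = (f x - a) / e n"
                have qn0: "0 < qn" using a0 p(1) by (simp add: qn_def)
                have dn0: "0 \<le> dn" using ab e0[of n] by (simp add: dn_def)
                have "min a m powr (-p) - min (f x) m powr (-p) \<le> a powr (-p) - f x powr (-p)"
                  using L_V(2)[OF a0 ab m0 p(1)] .
                also have "\<dots> \<le> p * a powr (-p-1) * (f x - a)" by (rule L_pow1[OF a0 ab p(1)])
                finally have "(min a m powr (-p) - min (f x) m powr (-p)) / e n \<le> (p * a powr (-p-1) * (f x - a)) / e n"
                  using e0[of n] by (intro divide_right_mono) auto
                also have "\<dots> = qn * dn" by (simp add: qn_def dn_def)
                also have "\<dots> \<le> qn * y" using elim(1) qn0 by (intro mult_left_mono) (auto simp: dn_def a_def)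
                also have "\<dots> \<le> z * y" using elim(2) y0 by (intro mult_right_mono) (auto simp: qn_def a_def)
                finally have "(min a m powr (-p) - min (f x) m powr (-p)) / e n < c'" using zy by linarith
                then show ?case using real C00 c'C0 by (simp add: ux a_def ennreal_lessI)
              qed
            qed
          qed
        qed
        have AEb: "AE x in \<mu>. x \<in> \<Omega> \<longrightarrow> Phi f x / ereal (f x) \<le> ereal b"
          using esssup_AE[of \<mu> \<Omega> "\<lambda>x. Phi f x / ereal (f x)" b] Bb by (simp add: B_def)
        have "(\<integral>\<^sup>+x. limsup (\<lambda>n. u n x) \<partial>\<mu>) \<le> (\<integral>\<^sup>+x. indicator \<Omega> x * ennreal (p * b * f x powr (-p)) \<partial>\<mu>)"
        proof (rule nn_integral_mono_AE)
          show "AE x in \<mu>. limsup (\<lambda>n. u n x) \<le> indicator \<Omega> x * ennreal (p * b * f x powr (-p))"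
            using AEb
          proof eventually_elim
            case (elim x)
            show ?case
            proof (cases "x \<in> \<Omega>")
              case False then show ?thesis by (simp add: u_def Limsup_const)
            next
              case True
              have fx: "0 < f x" using fpos True by simp
              have "Phi f x \<le> ereal (b * f x)"
              proof (cases "Phi f x")
                case (real r)
                then have "r / f x \<le> b" using elim True fx by simp
                then show ?thesis using real fx by (simp add: divide_le_eq mult.commute)
              next
                case PInf then show ?thesis using elim True fx by simp
              qed simp
              then show ?thesis using ptE[OF True] True by simp
            qed
          qed
        qed
        also have "\<dots> = ennreal (p * b * I)"
        proof -
          have "(\<integral>\<^sup>+x. indicator \<Omega> x * ennreal (p * b * f x powr (-p)) \<partial>\<mu>)
              = (\<integral>\<^sup>+x. ennreal (p * b * (indicator \<Omega> x * f x powr (-p))) \<partial>\<mu>)"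
            by (intro nn_integral_cong) (simp add: indicator_mult_ennreal mult.left_commute)
          also have "\<dots> = ennreal (\<integral>x. p * b * (indicator \<Omega> x * f x powr (-p)) \<partial>\<mu>)"
            using p(1) b0 by (intro nn_integral_eq_integral integrable_mult_right fmp') (auto simp: indicator_def)
          also have "\<dots> = ennreal (p * b * I)" by (simp add: I_eq)
          finally show ?thesis .
        qed
        finally show ?thesis .
      qed

      define X where "X = (\<integral>x. indicator \<Omega> x * (\<kappa> * ln 2 * (min (fe x) m powr (-p) - m powr (-p))) \<partial>\<mu>)"
      have Xint: "integrable \<mu> (\<lambda>x. indicator \<Omega> x * (\<kappa> * ln 2 * (min (fe x) m powr (-p) - m powr (-p))))"
      proof (rule P.integrable_const_bound)
        show "(\<lambda>x. indicator \<Omega> x * (\<kappa> * ln 2 * (min (fe x) m powr (-p) - m powr (-p)))) \<in> borel_measurable \<mu>"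
          unfolding bm_eq by measurable
        show "AE x in \<mu>. norm (indicator \<Omega> x * (\<kappa> * ln 2 * (min (fe x) m powr (-p) - m powr (-p))))
            \<le> \<kappa> * ln 2 * min l m powr (-p)"
        proof (intro AE_I2)
          fix x
          show "norm (indicator \<Omega> x * (\<kappa> * ln 2 * (min (fe x) m powr (-p) - m powr (-p))))
            \<le> \<kappa> * ln 2 * min l m powr (-p)"
          proof (cases "x \<in> \<Omega>")
            case False then show ?thesis using kappa by simp
          next
            case True
            have A1: "min l m \<le> min (fe x) m" using fl True fe_eq by (simp add: min.coboundedI1)
            have A2: "0 < min l m" using l0 m0 by simp
            have m1: "m powr (-p) \<le> min (fe x) m powr (-p)"
              using A1 A2 p(1) by (intro powr_mono2') auto
            have m2: "min (fe x) m powr (-p) \<le> min l m powr (-p)"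
              using A1 A2 p(1) by (intro powr_mono2') auto
            have "0 \<le> min (fe x) m powr (-p) - m powr (-p)" using m1 by simp
            moreover have "min (fe x) m powr (-p) - m powr (-p) \<le> min l m powr (-p)" using m2 powr_ge_zero[of m "-p"] by linarith
            ultimately show ?thesis using True kappa
              by (simp add: abs_mult mult_left_mono)
          qed
        qed
      qed
      have G1: "(\<integral>\<^sup>+x. indicator \<Omega> x * ennreal (\<kappa> * ln 2 * (min (fe x) m powr (-p) - m powr (-p))) \<partial>\<mu>)
          = ennreal X"
      proof -
        have "(\<integral>\<^sup>+x. indicator \<Omega> x * ennreal (\<kappa> * ln 2 * (min (fe x) m powr (-p) - m powr (-p))) \<partial>\<mu>)
          = (\<integral>\<^sup>+x. ennreal (indicator \<Omega> x * (\<kappa> * ln 2 * (min (fe x) m powr (-p) - m powr (-p)))) \<partial>\<mu>)"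
          by (simp add: indicator_mult_ennreal)
        also have "\<dots> = ennreal X" unfolding X_def
        proof (rule nn_integral_eq_integral[OF Xint])
          show "AE x in \<mu>. 0 \<le> indicator \<Omega> x * (\<kappa> * ln 2 * (min (fe x) m powr (-p) - m powr (-p)))"
          proof (intro AE_I2)
            fix x
            show "0 \<le> indicator \<Omega> x * (\<kappa> * ln 2 * (min (fe x) m powr (-p) - m powr (-p)))"
            proof (cases "x \<in> \<Omega>")
              case True
              have "0 < min (fe x) m" using fpos True fe_eq m0 by simp
              then have "m powr (-p) \<le> min (fe x) m powr (-p)" using p(1) by (intro powr_mono2') auto
              then show ?thesis using True kappa by simp
            qed simp
          qed
        qed
        finally show ?thesis .
      qed
      have G2: "\<kappa> * ln 2 * (I - m powr (-p)) \<le> X"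
      proof -
        have i1: "integrable \<mu> (\<lambda>x. \<kappa> * ln 2 * (indicator \<Omega> x * f x powr (-p)))"
          by (intro integrable_mult_right fmp')
        have i2: "integrable \<mu> (\<lambda>x. \<kappa> * ln 2 * (indicator \<Omega> x * m powr (-p)))"
          using \<Omega>b borel by (intro integrable_mult_right integrable_mult_left integrable_real_indicator)
           (auto simp: P.emeasure_eq_measure)
        have int2: "integrable \<mu> (\<lambda>x. \<kappa> * ln 2 * (indicator \<Omega> x * f x powr (-p)) - \<kappa> * ln 2 * (indicator \<Omega> x * m powr (-p)))"
          by (rule Bochner_Integration.integrable_diff[OF i1 i2])
        have "(\<integral>x. \<kappa> * ln 2 * (indicator \<Omega> x * f x powr (-p)) - \<kappa> * ln 2 * (indicator \<Omega> x * m powr (-p)) \<partial>\<mu>) \<le> X"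
          unfolding X_def
        proof (rule integral_mono[OF int2 Xint])
          fix x
          show "\<kappa> * ln 2 * (indicator \<Omega> x * f x powr (-p)) - \<kappa> * ln 2 * (indicator \<Omega> x * m powr (-p))
              \<le> indicator \<Omega> x * (\<kappa> * ln 2 * (min (fe x) m powr (-p) - m powr (-p)))"
          proof (cases "x \<in> \<Omega>")
            case True
            have "0 < min (fe x) m" using fpos True fe_eq m0 by simp
            then have "f x powr (-p) \<le> min (fe x) m powr (-p)" using p(1) True fe_eq by (intro powr_mono2') auto
            then have "\<kappa> * ln 2 * f x powr (-p) \<le> \<kappa> * ln 2 * min (fe x) m powr (-p)"
              using kappa by (intro mult_left_mono) auto
            then show ?thesis using True by (simp add: algebra_simps)
          qed simp
        qed
        moreover have "(\<integral>x. \<kappa> * ln 2 * (indicator \<Omega> x * f x powr (-p)) - \<kappa> * ln 2 * (indicator \<Omega> x * m powr (-p)) \<partial>\<mu>)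
            = \<kappa> * ln 2 * (I - m powr (-p))"
        proof -
          have d1: "(\<integral>x. \<kappa> * ln 2 * (indicator \<Omega> x * f x powr (-p)) \<partial>\<mu>) = \<kappa> * ln 2 * I"
            by (simp add: I_eq)
          have d2: "(\<integral>x. \<kappa> * ln 2 * (indicator \<Omega> x * m powr (-p)) \<partial>\<mu>) = \<kappa> * ln 2 * m powr (-p)"
            using supp spU by simp
          show ?thesis
            by (simp only: Bochner_Integration.integral_diff[OF i1 i2] d1 d2 right_diff_distrib)
        qed
        ultimately show ?thesis by simp
      qed

      have "ennreal X \<le> ennreal (p * b * I)"
      proof -
        have "ennreal X = (\<integral>\<^sup>+t. indicator {l<..m} t * ennreal (w t * (\<kappa> * ln 2 * F t)) \<partial>lborel)"
          using C2 G1 by simp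
        also have "\<dots> \<le> liminf (\<lambda>n. \<integral>\<^sup>+t. v n t \<partial>lborel)" by (rule fatou)
        also have "\<dots> = liminf (\<lambda>n. \<integral>\<^sup>+x. u n x \<partial>\<mu>)" by (simp add: C1)
        also have "\<dots> \<le> limsup (\<lambda>n. \<integral>\<^sup>+x. u n x \<partial>\<mu>)" by (rule Liminf_le_Limsup) simp
        also have "\<dots> \<le> (\<integral>\<^sup>+x. limsup (\<lambda>n. u n x) \<partial>\<mu>)" by (rule D)
        also have "\<dots> \<le> ennreal (p * b * I)" by (rule E)
        finally show ?thesis .
      qed
      then have "X \<le> p * b * I" using p(1) b0 I0 by (simp add: ennreal_le_iff)
      then have "\<kappa> * ln 2 * (I - m powr (-p)) \<le> t * (\<kappa> * ln 2) * I" using G2 pb by simp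
      then have "\<kappa> * ln 2 * (I - m powr (-p)) \<le> \<kappa> * ln 2 * (t * I)" by (simp add: algebra_simps)
      then have "I - m powr (-p) \<le> t * I" using kappa by (simp add: mult_le_cancel_left_pos)
      then have "I * (1 - t) \<le> m powr (-p)" by (simp add: algebra_simps)
      then show ?thesis using t1 by (simp add: field_simps)
    qed
    have Ipos: "0 < I"
    proof -
      define S where "S = {x\<in>\<Omega>. fe x \<le> m}"
      have S[measurable]: "S \<in> sets borel" unfolding S_def by measurable
      have S_eq: "S = {x\<in>\<Omega>. f x \<le> m}" by (auto simp: S_def fe_eq)
      have mS: "1/2 \<le> measure \<mu> S" using med by (simp add: levy_mean_def S_eq)
      have "(\<integral>x. indicator S x * m powr (-p) \<partial>\<mu>) \<le> (\<integral>x. indicator \<Omega> x * f x powr (-p) \<partial>\<mu>)"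
      proof (rule integral_mono[OF _ fmp'])
        show "integrable \<mu> (\<lambda>x. indicator S x * m powr - p)"
          using S borel by (intro integrable_mult_left integrable_real_indicator) (auto simp: P.emeasure_eq_measure)
        fix x
        show "indicator S x * m powr - p \<le> indicator \<Omega> x * f x powr - p"
        proof (cases "x \<in> S")
          case True
          then have "x \<in> \<Omega>" "f x \<le> m" by (auto simp: S_eq)
          then show ?thesis using True fpos p(1) by (simp add: powr_mono2')
        next
          case False then show ?thesis by (simp add: indicator_def)
        qed
      qed
      then have "measure \<mu> S * m powr (-p) \<le> I" using spU by (simp add: I_eq)
      moreover have "0 < measure \<mu> S * m powr (-p)" using mS m0 by simp
      ultimately show ?thesis by linarith
    qed
    have "m \<le> (exp 1 / (1 - t)) powr (t / p) * I powr (-1/p)"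
      by (rule L_fin2[OF p(1) t0 t1 m0 Ipos Ibound])
    moreover have "t / p = \<beta>" using p(1) by (simp add: t_def)
    ultimately show ?thesis
      unfolding Let_def B_def[symmetric] b_def[symmetric] \<beta>_def[symmetric] I_def[symmetric]
      by (simp add: t_def)
  qed
qed

end
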